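(* Let $c_0,c_1$ be convex loops with length measures $\mu_0,\mu_1$, and let $\sigma_i\in L^1_+(S^1,\mu_i)$, $i=0,1$, be Borel functions such that $\sigma_i\mu_i$ are probability measures. Set $\psi_i:=\sigma_i\circ T_{c_i}$. Then for every coupling $\eta\in\Gamma_b(\sigma_0\mu_0,\sigma_1\mu_1)$ there exists a coupling $\nu\in\Gamma_b(\psi_0|c_0'|\,\mathrm{d}s,\ \psi_1|c_1'|\,\mathrm{d}s)$ such that \[ \eta=(T_{c_0}\times T_{c_1})_\#\nu . \]
   Context: Identify $S^1$ with $\mathbb{R}/2\pi\mathbb{Z}$ (arc-length measure $\mathrm{d}s$) and with the unit circle in $\mathbb{C}$. A convex loop is a curve $c\in W^{1,1}(S^1,\mathbb{C})$ with $c'\neq0$ a.e. whose image is the boundary of a convex set in $\mathbb{C}$, positively oriented (interior to the left of $c'$ a.e.). Gauss map $T_c:=c'/|c'|:S^1\to S^1$ (defined a.e.), length measure $\mu_c:=(T_c)_\#(|c'|\,\mathrm{d}s)$. $\Gamma_b(\alpha,\beta)$ denotes the set of nonnegative measures on $S^1\times S^1$ with marginals $\alpha$ and $\beta$. *)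

theory Defs
  imports "HOL-Probability.Probability"
begin

text \<open>The parameter circle S^1 = R/2piZ, represented by the fundamental domain [0,2pi)
  with Lebesgue (arc-length) measure.\<close>
definition Dom :: "real measure" where
  "Dom = restrict_space lborel {0..<2*pi}"

definition Circ :: "complex measure" where
  "Circ = restrict_space borel (sphere 0 1)"

text \<open>A convex loop: c is 2pi-periodic, in W^{1,1} with weak derivative dc
  (c is the indefinite integral of the integrable function dc), dc is nonzero a.e.,
  the image of c is the boundary of a convex set K, and the interior of K lies
  to the left of dc a.e.\<close>
definition convex_loop :: "(real \<Rightarrow> complex) \<Rightarrow> (real \<Rightarrow> complex) \<Rightarrow> bool" where
  "convex_loop c dc \<longleftrightarrow>
     (\<forall>t. c (t + 2*pi) = c t) \<and>
     set_integrable lborel {0..2*pi} dc \<and>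
     (\<forall>t\<in>{0..2*pi}. c t = c 0 + (LINT s:{0..t}|lborel. dc s)) \<and>
     (AE s in Dom. dc s \<noteq> 0) \<and>
     (\<exists>K::complex set. convex K \<and> range c = frontier K \<and>
        (AE s in Dom. \<forall>z\<in>interior K. Im ((z - c s) * cnj (dc s)) > 0))"

text \<open>Gauss map T_c = c'/|c'| (arbitrary value 1 on the null set where c' = 0).\<close>
definition gauss :: "(real \<Rightarrow> complex) \<Rightarrow> real \<Rightarrow> complex" where
  "gauss dc s = (if dc s = 0 then 1 else sgn (dc s))"

definition arclen :: "(real \<Rightarrow> complex) \<Rightarrow> real measure" where
  "arclen dc = density Dom (\<lambda>s. ennreal (cmod (dc s)))"

definition length_measure :: "(real \<Rightarrow> complex) \<Rightarrow> complex measure" where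
  "length_measure dc = distr (arclen dc) Circ (gauss dc)"

definition couplings :: "'a measure \<Rightarrow> 'b measure \<Rightarrow> 'a measure \<Rightarrow> 'b measure
    \<Rightarrow> ('a \<times> 'b) measure set" where
  "couplings M N \<alpha> \<beta> = {\<nu>. sets \<nu> = sets (M \<Otimes>\<^sub>M N) \<and> finite_measure \<nu> \<and>
      distr \<nu> M fst = \<alpha> \<and> distr \<nu> N snd = \<beta>}"

end

theory Submission
  imports Defs
begin


lemma AE_le_of_int_le:
  fixes f g :: "'a \<Rightarrow> ennreal"
  assumes f[measurable]: "f \<in> borel_measurable M" and g[measurable]: "g \<in> borel_measurable M"
    and le: "\<And>E. E \<in> sets M \<Longrightarrow> (\<integral>\<^sup>+x. f x * indicator E x \<partial>M) \<le> (\<integral>\<^sup>+x. g x * indicator E x \<partial>M)"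
    and fin: "\<And>E. E \<in> sets M \<Longrightarrow> (\<integral>\<^sup>+x. g x * indicator E x \<partial>M) < \<infinity>"
  shows "AE x in M. f x \<le> g x"
proof -
  define E where "E = {x\<in>space M. g x < f x}"
  have E[measurable]: "E \<in> sets M" unfolding E_def by measurable
  have eq: "(\<integral>\<^sup>+x. f x * indicator E x \<partial>M) = (\<integral>\<^sup>+x. g x * indicator E x \<partial>M) + (\<integral>\<^sup>+x. (f x - g x) * indicator E x \<partial>M)"
  proof -
    have "(\<integral>\<^sup>+x. f x * indicator E x \<partial>M) = (\<integral>\<^sup>+x. g x * indicator E x + (f x - g x) * indicator E x \<partial>M)"
      by (intro nn_integral_cong) (auto simp: E_def indicator_def less_imp_le add_diff_inverse_ennreal)
    also have "\<dots> = (\<integral>\<^sup>+x. g x * indicator E x \<partial>M) + (\<integral>\<^sup>+x. (f x - g x) * indicator E x \<partial>M)"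
      by (intro nn_integral_add) auto
    finally show ?thesis .
  qed
  have "(\<integral>\<^sup>+x. (f x - g x) * indicator E x \<partial>M) = 0"
  proof -
    have "(\<integral>\<^sup>+x. g x * indicator E x \<partial>M) + (\<integral>\<^sup>+x. (f x - g x) * indicator E x \<partial>M) \<le> (\<integral>\<^sup>+x. g x * indicator E x \<partial>M) + 0"
      using le[OF E] eq by simp
    then show ?thesis using fin[OF E] by (auto simp add: ennreal_add_left_cancel_le)
  qed
  then have "AE x in M. (f x - g x) * indicator E x = 0"
    by (subst (asm) nn_integral_0_iff_AE) auto
  then show ?thesis using AE_space
    by eventually_elim (auto simp: E_def indicator_def split: if_splits dest: ennreal_minus_eq_0)
qed



lemma U_le:
  fixes c :: ennreal
  assumes "c \<le> 1"
  shows "emeasure (restrict_space lborel {0<..<1::real}) {u\<in>{0<..<1}. ennreal u \<le> c} = c"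
proof -
  obtain r where r: "c = ennreal r" "0 \<le> r" "r \<le> 1"
    using assms by (cases c) (auto simp: ennreal_le_1 top_unique)
  have "{u\<in>{0<..<1::real}. ennreal u \<le> c} = {u\<in>{0<..<1}. u \<le> r}"
    using r by (auto simp: ennreal_le_iff)
  also have "\<dots> = (if r < 1 then {0<..r} else {0<..<1})"
    using r by auto
  finally have eq: "{u\<in>{0<..<1::real}. ennreal u \<le> c} = (if r < 1 then {0<..r} else {0<..<1})" .
  show ?thesis
    unfolding eq using r
    by (subst emeasure_restrict_space) auto
qed

lemma prob_U: "prob_space (restrict_space lborel {0<..<1::real})"
  by (rule prob_space_restrict_space) auto



lemma disint:
  fixes \<alpha> :: "real measure" and Y :: "'b measure" and T :: "real \<Rightarrow> 'b"
  assumes fin: "finite_measure \<alpha>" and s\<alpha>: "sets \<alpha> = sets borel"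
    and T[measurable]: "T \<in> measurable borel Y"
    and conc: "AE s in \<alpha>. 0 \<le> s \<and> s < 8"
  shows "\<exists>G \<in> borel_measurable (distr \<alpha> Y T \<Otimes>\<^sub>M restrict_space lborel {0<..<1::real}).
     distr (distr \<alpha> Y T \<Otimes>\<^sub>M restrict_space lborel {0<..<1}) (Y \<Otimes>\<^sub>M borel) (\<lambda>w. (fst w, G w))
       = distr \<alpha> (Y \<Otimes>\<^sub>M borel) (\<lambda>s. (T s, s))"
proof -
  interpret \<alpha>: finite_measure \<alpha> by fact
  define U where "U = restrict_space lborel {0<..<1::real}"
  define \<beta> where "\<beta> = distr \<alpha> Y T"
  have T\<alpha>[measurable]: "T \<in> measurable \<alpha> Y" by (subst measurable_cong_sets[OF s\<alpha> refl]) (rule T)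
  have im[measurable]: "(indicator {..r} :: real \<Rightarrow> ennreal) \<in> borel_measurable \<alpha>" for r
    by (subst measurable_cong_sets[OF s\<alpha> refl]) auto
  have id[measurable]: "(\<lambda>s. s) \<in> borel_measurable \<alpha>" by (subst measurable_cong_sets[OF s\<alpha> refl]) auto
  interpret \<beta>: finite_measure \<beta> unfolding \<beta>_def by (rule \<alpha>.finite_measure_distr) (rule T\<alpha>)
  have s\<beta>: "sets \<beta> = sets Y" by (simp add: \<beta>_def)
  have sp\<beta>: "space \<beta> = space Y" by (simp add: \<beta>_def)
  define \<rho> where "\<rho> r = distr (density \<alpha> (indicator {..r})) Y T" for r :: real
  define f where "f r = RN_deriv \<beta> (\<rho> r)" for r
  have f_meas[measurable]: "f r \<in> borel_measurable Y" for r
    unfolding f_def by (subst measurable_cong_sets[OF s\<beta>[symmetric] refl]) (rule borel_measurable_RN_deriv)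
  have f_meas\<beta>[measurable]: "f r \<in> borel_measurable \<beta>" for r unfolding f_def by simp
  define A where "A E r = {s \<in> space \<alpha>. T s \<in> E \<and> s \<le> r}" for E r
  have A_sets[measurable]: "E \<in> sets Y \<Longrightarrow> A E r \<in> sets \<alpha>" for E r
  proof -
    assume [measurable]: "E \<in> sets Y"
    show ?thesis unfolding A_def by measurable
  qed
  have D: "(\<integral>\<^sup>+y. f r y * indicator E y \<partial>\<beta>) = emeasure \<alpha> (A E r)" if E[measurable]: "E \<in> sets Y" for E r
  proof -
    have ac: "absolutely_continuous \<beta> (\<rho> r)"
      unfolding absolutely_continuous_def
    proof
      fix N assume N: "N \<in> null_sets \<beta>"
      then have N1: "T -` N \<inter> space \<alpha> \<in> null_sets \<alpha>" and N2: "N \<in> sets Y"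
        using null_sets_distr_iff[OF T\<alpha>] by (auto simp: \<beta>_def)
      have "T -` N \<inter> space (density \<alpha> (indicator {..r})) \<in> null_sets (density \<alpha> (indicator {..r}))"
      proof -
        show ?thesis using N1 AE_not_in[OF N1]
          by (subst null_sets_density_iff[OF im]) (auto elim: eventually_mono)
      qed
      then show "N \<in> null_sets (\<rho> r)" unfolding \<rho>_def
        using N2 by (subst null_sets_distr_iff) auto
    qed
    have "density \<beta> (f r) = \<rho> r" unfolding f_def
      by (rule \<beta>.density_RN_deriv[OF ac]) (simp add: \<rho>_def \<beta>_def)
    then have "emeasure (density \<beta> (f r)) E = emeasure (\<rho> r) E" by simp
    also have "emeasure (\<rho> r) E = emeasure (density \<alpha> (indicator {..r})) (T -` E \<inter> space \<alpha>)"
      unfolding \<rho>_def by (subst emeasure_distr) auto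
    also have "\<dots> = (\<integral>\<^sup>+s. indicator {..r} s * indicator (T -` E \<inter> space \<alpha>) s \<partial>\<alpha>)"
      by (subst emeasure_density) auto
    also have "\<dots> = (\<integral>\<^sup>+s. indicator (A E r) s \<partial>\<alpha>)"
      by (intro nn_integral_cong) (auto simp: A_def indicator_def)
    also have "\<dots> = emeasure \<alpha> (A E r)" by simp
    finally show ?thesis
      by (subst (asm) emeasure_density) (auto simp: s\<beta>)
  qed
  have Afin: "emeasure \<alpha> (A E r) < \<top>" for E r
    using \<alpha>.emeasure_finite[of "A E r"] by (simp add: less_top[symmetric])
  have A_mono: "r \<le> r' \<Longrightarrow> A E r \<subseteq> A E r'" for E r r' by (auto simp: A_def)
  have mono_f: "AE y in \<beta>. f r y \<le> f r' y" if "r \<le> r'" for r r'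
  proof (rule AE_le_of_int_le)
    fix E assume E: "E \<in> sets \<beta>"
    show "(\<integral>\<^sup>+y. f r y * indicator E y \<partial>\<beta>) \<le> (\<integral>\<^sup>+y. f r' y * indicator E y \<partial>\<beta>)"
      using E that by (simp add: D s\<beta> emeasure_mono A_mono)
    show "(\<integral>\<^sup>+y. f r' y * indicator E y \<partial>\<beta>) < \<infinity>"
      using E by (simp add: D s\<beta> Afin)
  qed auto
  have le1: "AE y in \<beta>. f r y \<le> 1" for r
  proof (rule AE_le_of_int_le)
    fix E assume E: "E \<in> sets \<beta>"
    have "emeasure \<alpha> (A E r) \<le> emeasure \<alpha> (T -` E \<inter> space \<alpha>)"
      using E by (intro emeasure_mono) (auto simp: A_def s\<beta>)
    also have "\<dots> = emeasure \<beta> E" using E by (simp add: \<beta>_def emeasure_distr s\<beta>)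
    finally show "(\<integral>\<^sup>+y. f r y * indicator E y \<partial>\<beta>) \<le> (\<integral>\<^sup>+y. 1 * indicator E y \<partial>\<beta>)"
      using E by (simp add: D s\<beta>)
    show "(\<integral>\<^sup>+y. 1 * indicator E y \<partial>\<beta>) < \<infinity>"
      using E \<beta>.emeasure_finite[of E] by (simp add: less_top[symmetric])
  qed auto
  have lo: "AE y in \<beta>. f (-1) y \<le> 0"
  proof (rule AE_le_of_int_le)
    fix E assume E: "E \<in> sets \<beta>"
    have "emeasure \<alpha> (A E (-1)) = 0"
      unfolding A_def by (rule emeasure_eq_0_AE) (use conc in \<open>auto elim: eventually_mono\<close>)
    then show "(\<integral>\<^sup>+y. f (-1) y * indicator E y \<partial>\<beta>) \<le> (\<integral>\<^sup>+y. 0 * indicator E y \<partial>\<beta>)"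
      using E by (simp add: D s\<beta>)
  qed auto
  have hi: "AE y in \<beta>. 1 \<le> f r y" if r7: "8 \<le> r" for r
  proof (rule AE_le_of_int_le)
    fix E assume E: "E \<in> sets \<beta>"
    have "emeasure \<alpha> (A E r) = emeasure \<alpha> (T -` E \<inter> space \<alpha>)"
    proof (rule emeasure_eq_AE)
      show "AE s in \<alpha>. s \<in> A E r \<longleftrightarrow> s \<in> T -` E \<inter> space \<alpha>"
        using conc AE_space by eventually_elim (use r7 in \<open>auto simp: A_def\<close>)
    qed (use E in \<open>auto simp: s\<beta>\<close>)
    also have "\<dots> = emeasure \<beta> E" using E by (simp add: \<beta>_def emeasure_distr s\<beta>)
    finally show "(\<integral>\<^sup>+y. 1 * indicator E y \<partial>\<beta>) \<le> (\<integral>\<^sup>+y. f r y * indicator E y \<partial>\<beta>)"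
      using E by (simp add: D s\<beta>)
    show "(\<integral>\<^sup>+y. f r y * indicator E y \<partial>\<beta>) < \<infinity>"
      using E by (simp add: D s\<beta> Afin)
  qed auto
  define Ft where "Ft y x = (INF q\<in>{q\<in>\<rat>. x < q}. f q y)" for y x
  have cQ: "countable {q\<in>\<rat>. x < q}" for x :: real
    by (rule countable_subset[OF _ countable_rat]) auto
  have Ft_meas[measurable]: "(\<lambda>y. Ft y x) \<in> borel_measurable Y" for x
    unfolding Ft_def by (rule borel_measurable_INF[OF cQ]) simp
  have Ft_le: "q \<in> \<rat> \<Longrightarrow> x < q \<Longrightarrow> Ft y x \<le> f q y" for q x y
    unfolding Ft_def by (rule INF_lower) auto
  have Ft_mono: "x \<le> x' \<Longrightarrow> Ft y x \<le> Ft y x'" for x x' y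
    unfolding Ft_def by (rule INF_superset_mono) auto
  have Ft_rc: "c \<le> Ft y x" if H: "\<And>x'. x < x' \<Longrightarrow> c \<le> Ft y x'" for c y x
    unfolding Ft_def
  proof (rule INF_greatest)
    fix q assume q: "q \<in> {q\<in>\<rat>. x < q}"
    then have "c \<le> Ft y ((x + q)/2)" by (intro H) auto
    also have "\<dots> \<le> f q y" using q by (intro Ft_le) auto
    finally show "c \<le> f q y" .
  qed
  have I: "(\<integral>\<^sup>+y. Ft y x * indicator E y \<partial>\<beta>) = emeasure \<alpha> (A E x)" if E[measurable]: "E \<in> sets Y" for E x
  proof (rule antisym)
    have "AE y in \<beta>. \<forall>q\<in>{q\<in>\<rat>. x < q}. f x y \<le> f q y"
      by (subst AE_ball_countable[OF cQ]) (auto intro: mono_f)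
    then have "AE y in \<beta>. f x y \<le> Ft y x"
      unfolding Ft_def by (auto elim!: eventually_mono intro: INF_greatest)
    then have "(\<integral>\<^sup>+y. f x y * indicator E y \<partial>\<beta>) \<le> (\<integral>\<^sup>+y. Ft y x * indicator E y \<partial>\<beta>)"
      by (intro nn_integral_mono_AE) (auto elim!: eventually_mono intro: mult_right_mono)
    then show "emeasure \<alpha> (A E x) \<le> (\<integral>\<^sup>+y. Ft y x * indicator E y \<partial>\<beta>)"
      by (simp add: D)
  next
    define B where "B n = A E (x + inverse (real (Suc n)))" for n
    have "(\<integral>\<^sup>+y. Ft y x * indicator E y \<partial>\<beta>) \<le> emeasure \<alpha> (B n)" for n
    proof -
      obtain q where q: "q \<in> \<rat>" "x < q" "q < x + inverse (real (Suc n))"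
        using Rats_dense_in_real[of x "x + inverse (real (Suc n))"] by auto
      have "(\<integral>\<^sup>+y. Ft y x * indicator E y \<partial>\<beta>) \<le> (\<integral>\<^sup>+y. f q y * indicator E y \<partial>\<beta>)"
        using q by (intro nn_integral_mono) (auto intro: mult_right_mono Ft_le)
      also have "\<dots> = emeasure \<alpha> (A E q)" by (simp add: D)
      also have "\<dots> \<le> emeasure \<alpha> (B n)" unfolding B_def
        using q by (intro emeasure_mono A_mono) auto
      finally show ?thesis .
    qed
    then have "(\<integral>\<^sup>+y. Ft y x * indicator E y \<partial>\<beta>) \<le> (INF n. emeasure \<alpha> (B n))"
      by (intro INF_greatest) auto
    also have "\<dots> = emeasure \<alpha> (\<Inter>n. B n)"
    proof (rule INF_emeasure_decseq)
      show "range B \<subseteq> sets \<alpha>" unfolding B_def by auto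
      show "decseq B" unfolding B_def decseq_def
        by (intro allI impI A_mono) (auto simp: field_simps)
      show "emeasure \<alpha> (B n) \<noteq> \<infinity>" for n using Afin[of E] by (simp add: B_def less_top[symmetric])
    qed
    also have "(\<Inter>n. B n) = A E x"
    proof (intro equalityI subsetI)
      fix s assume s: "s \<in> (\<Inter>n. B n)"
      have "s \<le> x"
      proof (rule ccontr)
        assume "\<not> s \<le> x"
        then obtain n where "inverse (real (Suc n)) < s - x"
          using reals_Archimedean[of "s - x"] by auto
        moreover have "s \<in> B n" using s by auto
        ultimately show False by (auto simp: B_def A_def)
      qed
      then show "s \<in> A E x" using s by (auto simp: B_def A_def)
    next
      fix s assume "s \<in> A E x" then show "s \<in> (\<Inter>n. B n)"
        unfolding B_def by (auto simp: A_def intro: order_trans[of s x] less_imp_le)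
    qed
    finally show "(\<integral>\<^sup>+y. Ft y x * indicator E y \<partial>\<beta>) \<le> emeasure \<alpha> (A E x)" .
  qed
  define Good where "Good = {y\<in>space Y. (\<forall>q\<in>\<rat>. f q y \<le> 1) \<and> f (-1) y \<le> 0 \<and> (\<forall>q\<in>{q\<in>\<rat>. 8 \<le> q}. 1 \<le> f q y)}"
  have Good_sets[measurable]: "Good \<in> sets Y"
  proof -
    have c1: "countable (\<rat>::real set)" by (rule countable_rat)
    have c2: "countable {q\<in>\<rat>. 8 \<le> (q::real)}" by (rule countable_subset[OF _ countable_rat]) auto
    have "{y\<in>space Y. \<forall>q\<in>\<rat>. f q y \<le> 1} \<in> sets Y"
      by (rule sets.sets_Collect_countable_All'[OF _ c1]) measurable
    moreover have "{y\<in>space Y. \<forall>q\<in>{q\<in>\<rat>. 8 \<le> q}. 1 \<le> f q y} \<in> sets Y"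
      by (rule sets.sets_Collect_countable_All'[OF _ c2]) measurable
    moreover have "{y\<in>space Y. f (-1) y \<le> 0} \<in> sets Y" by measurable
    ultimately have "{y\<in>space Y. \<forall>q\<in>\<rat>. f q y \<le> 1} \<inter> {y\<in>space Y. f (-1) y \<le> 0} \<inter> {y\<in>space Y. \<forall>q\<in>{q\<in>\<rat>. 8 \<le> q}. 1 \<le> f q y} \<in> sets Y"
      by auto
    also have "{y\<in>space Y. \<forall>q\<in>\<rat>. f q y \<le> 1} \<inter> {y\<in>space Y. f (-1) y \<le> 0} \<inter> {y\<in>space Y. \<forall>q\<in>{q\<in>\<rat>. 8 \<le> q}. 1 \<le> f q y} = Good"
      unfolding Good_def by auto
    finally show ?thesis .
  qed
  have AE_Good: "AE y in \<beta>. y \<in> Good"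
  proof -
    have "AE y in \<beta>. \<forall>q\<in>\<rat>. f q y \<le> 1"
      by (subst AE_ball_countable[OF countable_rat]) (auto intro: le1)
    moreover have "AE y in \<beta>. \<forall>q\<in>{q\<in>\<rat>. 8 \<le> q}. 1 \<le> f q y"
      by (subst AE_ball_countable) (auto intro: hi countable_subset[OF _ countable_rat])
    ultimately show ?thesis using lo AE_space
      by eventually_elim (auto simp: Good_def sp\<beta>)
  qed
  have G_le1: "y \<in> Good \<Longrightarrow> Ft y x \<le> 1" for y x
  proof -
    assume y: "y \<in> Good"
    obtain q where q: "q \<in> \<rat>" "x < q" using Rats_dense_in_real[of x "x+1"] by auto
    have "Ft y x \<le> f q y" using q by (rule Ft_le)
    also have "\<dots> \<le> 1" using y q by (auto simp: Good_def)
    finally show ?thesis .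
  qed
  have G_lo: "y \<in> Good \<Longrightarrow> Ft y (-2) = 0" for y
  proof -
    assume y: "y \<in> Good"
    have "Ft y (-2) \<le> f (-1) y" by (rule Ft_le) auto
    also have "\<dots> \<le> 0" using y by (auto simp: Good_def)
    finally show ?thesis by simp
  qed
  have G_hi: "y \<in> Good \<Longrightarrow> 1 \<le> Ft y 8" for y
    unfolding Ft_def by (rule INF_greatest) (auto simp: Good_def)
  define Q where "Q y u = Inf {x. ennreal u \<le> Ft y x}" for y and u :: real
  have QL: "Q y u \<le> a \<longleftrightarrow> ennreal u \<le> Ft y a" if y: "y \<in> Good" and u: "0 < u" "u < 1" for y u a
  proof -
    define S where "S = {x. ennreal u \<le> Ft y x}"
    have S7: "8 \<in> S" using G_hi[OF y] u by (auto simp: S_def intro: order_trans[rotated])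
    have Slow: "x \<in> S \<Longrightarrow> -2 \<le> x" for x
    proof (rule ccontr)
      assume "x \<in> S" "\<not> -2 \<le> x"
      then have "ennreal u \<le> Ft y (-2)" using Ft_mono[of x "-2" y] by (auto simp: S_def)
      then show False using G_lo[OF y] u by simp
    qed
    have bdd: "bdd_below S" unfolding bdd_below_def using Slow by blast
    have ne: "S \<noteq> {}" using S7 by auto
    have inS: "Inf S \<in> S"
    proof -
      have "ennreal u \<le> Ft y (Inf S)"
      proof (rule Ft_rc)
        fix x' assume "Inf S < x'"
        then obtain s where "s \<in> S" "s < x'" using cInf_less_iff[OF ne bdd] by auto
        then show "ennreal u \<le> Ft y x'" using Ft_mono[of s x' y] by (auto simp: S_def)
      qed
      then show ?thesis by (simp add: S_def)
    qed
    show ?thesis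
    proof
      assume "Q y u \<le> a"
      then have "Inf S \<le> a" by (simp add: Q_def S_def)
      then show "ennreal u \<le> Ft y a" using inS Ft_mono[of "Inf S" a y] by (auto simp: S_def)
    next
      assume "ennreal u \<le> Ft y a"
      then have "a \<in> S" by (simp add: S_def)
      then show "Q y u \<le> a" unfolding Q_def S_def[symmetric] by (rule cInf_lower[OF _ bdd])
    qed
  qed
  define G where "G w = (if fst w \<in> Good then Q (fst w) (snd w) else 0)" for w
  have spU: "space U = {0<..<1}" by (simp add: U_def)
  have sp: "space (\<beta> \<Otimes>\<^sub>M U) = space Y \<times> {0<..<1}" by (simp add: space_pair_measure sp\<beta> spU)
  have G_le_iff: "G w \<le> a \<longleftrightarrow> (fst w \<in> Good \<and> ennreal (snd w) \<le> Ft (fst w) a) \<or> (fst w \<notin> Good \<and> 0 \<le> a)"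
    if w: "w \<in> space (\<beta> \<Otimes>\<^sub>M U)" for w a
    using w QL[of "fst w" "snd w" a] by (auto simp: G_def sp)
  have snd_meas[measurable]: "(\<lambda>w. snd w) \<in> borel_measurable (\<beta> \<Otimes>\<^sub>M U)"
  proof -
    have "(\<lambda>u. u) \<in> borel_measurable U" unfolding U_def
      by (rule measurable_restrict_space1) simp
    then show ?thesis by measurable
  qed
  have fst_meas[measurable]: "fst \<in> measurable (\<beta> \<Otimes>\<^sub>M U) Y"
    by (subst measurable_cong_sets[OF refl s\<beta>[symmetric]]) simp
  have G_meas[measurable]: "G \<in> borel_measurable (\<beta> \<Otimes>\<^sub>M U)"
    unfolding borel_measurable_iff_le
  proof
    fix a
    have "{w \<in> space (\<beta> \<Otimes>\<^sub>M U). G w \<le> a} = {w \<in> space (\<beta> \<Otimes>\<^sub>M U). (fst w \<in> Good \<and> ennreal (snd w) \<le> Ft (fst w) a) \<or> (fst w \<notin> Good \<and> 0 \<le> a)}"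
      using G_le_iff by blast
    also have "\<dots> \<in> sets (\<beta> \<Otimes>\<^sub>M U)" by measurable
    finally show "{w \<in> space (\<beta> \<Otimes>\<^sub>M U). G w \<le> a} \<in> sets (\<beta> \<Otimes>\<^sub>M U)" .
  qed
  have \<Phi>_meas[measurable]: "(\<lambda>w. (fst w, G w)) \<in> measurable (\<beta> \<Otimes>\<^sub>M U) (Y \<Otimes>\<^sub>M borel)" by measurable
  have \<Psi>_meas[measurable]: "(\<lambda>s. (T s, s)) \<in> measurable \<alpha> (Y \<Otimes>\<^sub>M borel)" by measurable
  interpret U: prob_space U unfolding U_def by (rule prob_U)
  define Egen where "Egen = {a \<times> b | a b. a \<in> sets Y \<and> b \<in> range (atMost :: real \<Rightarrow> real set)}"
  have Egen_Pow: "Egen \<subseteq> Pow (space Y \<times> UNIV)"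
    unfolding Egen_def using sets.sets_into_space by fastforce
  have sets_eq: "sets (Y \<Otimes>\<^sub>M borel) = sigma_sets (space Y \<times> UNIV) Egen"
  proof -
    have borel_gen: "sets (borel::real measure) = sigma_sets UNIV (range atMost)"
      by (subst borel_eq_atMost) (simp add: sets_measure_of)
    have cov: "(\<Union>(range (\<lambda>n::nat. {..real n}))) = UNIV"
      by (auto intro: real_arch_simple)
    have "sets (Y \<Otimes>\<^sub>M borel) = sets (sigma (space Y \<times> space (borel::real measure)) Egen)"
      unfolding Egen_def
    proof (rule sets_pair_eq[where Ca="{space Y}" and Cb="range (\<lambda>n::nat. {..real n})"])
      show "sets Y \<subseteq> Pow (space Y)" using sets.space_closed by auto
      show "sets Y = sigma_sets (space Y) (sets Y)" by (simp add: sets.sigma_sets_eq)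
      show "sets (borel::real measure) = sigma_sets (space borel) (range atMost)" using borel_gen by simp
    qed (use cov in auto)
    also have "\<dots> = sigma_sets (space Y \<times> UNIV) Egen"
      using Egen_Pow by (simp add: sets_measure_of)
    finally show ?thesis .
  qed
  have Int_Egen: "Int_stable Egen"
    unfolding Int_stable_def Egen_def
  proof safe
    fix a a' :: "'b set" and b b' :: real
    assume "a \<in> sets Y" "a' \<in> sets Y"
    then show "\<exists>c d. (a \<times> {..b}) \<inter> (a' \<times> {..b'}) = c \<times> d \<and> c \<in> sets Y \<and> d \<in> range atMost"
      by (intro exI[of _ "a \<inter> a'"] exI[of _ "{..min b b'}"]) auto
  qed
  have eqgen: "emeasure (distr \<alpha> (Y \<Otimes>\<^sub>M borel) (\<lambda>s. (T s, s))) X = emeasure (distr (\<beta> \<Otimes>\<^sub>M U) (Y \<Otimes>\<^sub>M borel) (\<lambda>w. (fst w, G w))) X"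
    if X: "X \<in> Egen" for X
  proof -
    obtain E a where X': "X = E \<times> {..a}" and E[measurable]: "E \<in> sets Y" using X by (auto simp: Egen_def)
    have Xs: "X \<in> sets (Y \<Otimes>\<^sub>M borel)" using X' by auto
    define Z where "Z = (\<lambda>w. (fst w, G w)) -` X \<inter> space (\<beta> \<Otimes>\<^sub>M U)"
    have Zs: "Z \<in> sets (\<beta> \<Otimes>\<^sub>M U)" unfolding Z_def by (rule measurable_sets[OF \<Phi>_meas Xs])
    have "emeasure (distr (\<beta> \<Otimes>\<^sub>M U) (Y \<Otimes>\<^sub>M borel) (\<lambda>w. (fst w, G w))) X = emeasure (\<beta> \<Otimes>\<^sub>M U) Z"
      unfolding Z_def using Xs by (subst emeasure_distr) auto
    also have "\<dots> = (\<integral>\<^sup>+y. emeasure U (Pair y -` Z) \<partial>\<beta>)"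
      by (rule U.emeasure_pair_measure_alt[OF Zs])
    also have "\<dots> = (\<integral>\<^sup>+y. Ft y a * indicator E y \<partial>\<beta>)"
    proof (rule nn_integral_cong_AE)
      show "AE y in \<beta>. emeasure U (Pair y -` Z) = Ft y a * indicator E y"
        using AE_Good
      proof eventually_elim
        fix y assume y: "y \<in> Good"
        then have yY: "y \<in> space Y" by (auto simp: Good_def)
        show "emeasure U (Pair y -` Z) = Ft y a * indicator E y"
        proof (cases "y \<in> E")
          case True
          have "Pair y -` Z = {u\<in>{0<..<1}. ennreal u \<le> Ft y a}"
          proof (intro equalityI subsetI)
            fix u assume "u \<in> Pair y -` Z"
            then have u: "(y,u) \<in> space (\<beta> \<Otimes>\<^sub>M U)" "G (y,u) \<le> a" by (auto simp: Z_def X')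
            then show "u \<in> {u\<in>{0<..<1}. ennreal u \<le> Ft y a}" using G_le_iff[OF u(1), of a] y by (auto simp: sp)
          next
            fix u assume u: "u \<in> {u\<in>{0<..<1}. ennreal u \<le> Ft y a}"
            then have w: "(y,u) \<in> space (\<beta> \<Otimes>\<^sub>M U)" using yY by (simp add: sp)
            then have "G (y,u) \<le> a" using G_le_iff[OF w, of a] y u by auto
            then show "u \<in> Pair y -` Z" using w True by (simp add: Z_def X')
          qed
          then show ?thesis using True U_le[OF G_le1[OF y]] by (simp add: U_def)
        next
          case False
          then have "Pair y -` Z = {}" by (auto simp: Z_def X')
          then show ?thesis using False by simp
        qed
      qed
    qed
    also have "\<dots> = emeasure \<alpha> (A E a)" by (rule I[OF E])
    also have "\<dots> = emeasure (distr \<alpha> (Y \<Otimes>\<^sub>M borel) (\<lambda>s. (T s, s))) X"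
      using Xs by (subst emeasure_distr) (auto simp: X' A_def intro!: arg_cong[where f="emeasure \<alpha>"])
    finally show ?thesis by simp
  qed
  have "distr \<alpha> (Y \<Otimes>\<^sub>M borel) (\<lambda>s. (T s, s)) = distr (\<beta> \<Otimes>\<^sub>M U) (Y \<Otimes>\<^sub>M borel) (\<lambda>w. (fst w, G w))"
  proof (rule measure_eqI_generator_eq[OF Int_Egen Egen_Pow eqgen, where A="\<lambda>i. space Y \<times> {..real i}"])
    show "sets (distr \<alpha> (Y \<Otimes>\<^sub>M borel) (\<lambda>s. (T s, s))) = sigma_sets (space Y \<times> UNIV) Egen"
      using sets_eq by simp
    show "sets (distr (\<beta> \<Otimes>\<^sub>M U) (Y \<Otimes>\<^sub>M borel) (\<lambda>w. (fst w, G w))) = sigma_sets (space Y \<times> UNIV) Egen"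
      using sets_eq by simp
    show "range (\<lambda>i. space Y \<times> {..real i}) \<subseteq> Egen"
    proof (rule subsetI)
      fix X assume "X \<in> range (\<lambda>i. space Y \<times> {..real i})"
      then obtain i where "X = space Y \<times> {..real i}" by blast
      then show "X \<in> Egen" unfolding Egen_def using sets.top[of Y] by blast
    qed
    show "(\<Union>i. space Y \<times> {..real i}) = space Y \<times> UNIV"
    proof (intro equalityI subsetI)
      fix w :: "'b \<times> real" assume "w \<in> space Y \<times> UNIV"
      moreover obtain n where "snd w \<le> real n" using real_arch_simple by blast
      ultimately show "w \<in> (\<Union>i. space Y \<times> {..real i})" by (cases w) auto
    qed blast
    show "emeasure (distr \<alpha> (Y \<Otimes>\<^sub>M borel) (\<lambda>s. (T s, s))) (space Y \<times> {..real i}) \<noteq> \<infinity>" for i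
      unfolding infinity_ennreal_def by (rule finite_measure.emeasure_finite[OF \<alpha>.finite_measure_distr[OF \<Psi>_meas]])
  qed
  then have "distr (\<beta> \<Otimes>\<^sub>M U) (Y \<Otimes>\<^sub>M borel) (\<lambda>w. (fst w, G w)) = distr \<alpha> (Y \<Otimes>\<^sub>M borel) (\<lambda>s. (T s, s))"
    by (rule sym)
  then show ?thesis using G_meas unfolding U_def \<beta>_def by blast
qed



lemma gauss_meas_gen:
  assumes [measurable]: "d \<in> borel_measurable M"
  shows "gauss d \<in> measurable M Circ"
  unfolding Circ_def measurable_restrict_space2_iff
proof
  show "gauss d \<in> borel_measurable M" unfolding gauss_def by measurable
  show "gauss d \<in> space M \<rightarrow> sphere 0 1" by (auto simp: gauss_def norm_sgn)
qed

lemma dc_meas: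
  assumes "convex_loop c dc"
  shows "(\<lambda>s. indicator {0..<2*pi} s *\<^sub>R dc s) \<in> borel_measurable borel"
proof -
  have "set_integrable lborel {0..2*pi} dc" using assms by (simp add: convex_loop_def)
  then have "(\<lambda>s. indicator {0..2*pi} s *\<^sub>R dc s) \<in> borel_measurable lborel"
    unfolding set_integrable_def by (rule borel_measurable_integrable)
  then have m[measurable]: "(\<lambda>s. indicator {0..2*pi} s *\<^sub>R dc s) \<in> borel_measurable borel" by simp
  have "(\<lambda>s. indicator {0..<2*pi} s *\<^sub>R dc s) = (\<lambda>s. indicator {0..<2*pi} s *\<^sub>R (indicator {0..2*pi} s *\<^sub>R dc s))"
    by (auto simp: indicator_def fun_eq_iff)
  also have "\<dots> \<in> borel_measurable borel" by measurable
  finally show ?thesis .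
qed

lemma space_Dom: "space Dom = {0..<2*pi}"
  by (simp add: Dom_def space_restrict_space)

lemma side:
  assumes cl: "convex_loop c dc" and \<sigma>m[measurable]: "\<sigma> \<in> borel_measurable Circ"
    and pr: "prob_space (density (length_measure dc) (\<lambda>x. ennreal (\<sigma> x)))"
  shows "\<exists>G \<in> measurable (Circ \<Otimes>\<^sub>M restrict_space lborel {0<..<1::real}) Dom.
     distr (density (length_measure dc) (\<lambda>x. ennreal (\<sigma> x)) \<Otimes>\<^sub>M restrict_space lborel {0<..<1}) Dom G
        = density (arclen dc) (\<lambda>s. ennreal ((\<sigma> \<circ> gauss dc) s))
     \<and> (AE w in density (length_measure dc) (\<lambda>x. ennreal (\<sigma> x)) \<Otimes>\<^sub>M restrict_space lborel {0<..<1}.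
          gauss dc (G w) = fst w)"
proof -
  define U where "U = restrict_space lborel {0<..<1::real}"
  define \<beta> where "\<beta> = density (length_measure dc) (\<lambda>x. ennreal (\<sigma> x))"
  define \<alpha> where "\<alpha> = density (arclen dc) (\<lambda>s. ennreal ((\<sigma> \<circ> gauss dc) s))"
  define dc' where "dc' = (\<lambda>s. indicator {0..<2*pi} s *\<^sub>R dc s)"
  have dc'm[measurable]: "dc' \<in> borel_measurable borel" unfolding dc'_def by (rule dc_meas[OF cl])
  define T' where "T' = gauss dc'"
  have T'm[measurable]: "T' \<in> measurable borel Circ" unfolding T'_def by (rule gauss_meas_gen) simp
  have dc'eq: "s \<in> space Dom \<Longrightarrow> dc' s = dc s" for s by (simp add: space_Dom dc'_def)
  have T'eq: "s \<in> space Dom \<Longrightarrow> T' s = gauss dc s" for s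
    by (simp add: T'_def gauss_def dc'eq)
  have gm[measurable]: "gauss dc \<in> measurable Dom Circ"
  proof -
    have "T' \<in> measurable Dom Circ" unfolding Dom_def by (rule measurable_restrict_space1) simp
    then show ?thesis using T'eq by (subst measurable_cong[where g=T']) auto
  qed
  have dcm[measurable]: "(\<lambda>s. ennreal (cmod (dc s))) \<in> borel_measurable Dom"
  proof -
    have "(\<lambda>s. ennreal (cmod (dc' s))) \<in> borel_measurable Dom" unfolding Dom_def
      by (rule measurable_restrict_space1) simp
    then show ?thesis using dc'eq by (subst measurable_cong[where g="\<lambda>s. ennreal (cmod (dc' s))"]) auto
  qed
  have sarc: "sets (arclen dc) = sets Dom" by (simp add: arclen_def)
  have gma[measurable]: "gauss dc \<in> measurable (arclen dc) Circ"
    by (subst measurable_cong_sets[OF sarc refl]) (rule gm)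
  have s\<alpha>: "sets \<alpha> = sets Dom" by (simp add: \<alpha>_def arclen_def)
  have sp\<alpha>: "space \<alpha> = {0..<2*pi}" by (simp add: \<alpha>_def arclen_def space_Dom)
  have gm\<alpha>[measurable]: "gauss dc \<in> measurable \<alpha> Circ"
    by (subst measurable_cong_sets[OF s\<alpha> refl]) (rule gm)
  have \<beta>eq: "\<beta> = distr \<alpha> Circ (gauss dc)"
    unfolding \<beta>_def length_measure_def \<alpha>_def
    by (subst density_distr) (auto simp: comp_def)
  interpret \<beta>: prob_space \<beta> unfolding \<beta>_def by (rule pr)
  have "emeasure \<alpha> (space \<alpha>) = emeasure \<beta> (space \<beta>)"
    unfolding \<beta>eq by (subst emeasure_distr) (auto simp: measurable_space[OF gm\<alpha>] intro!: arg_cong[where f="emeasure \<alpha>"])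
  then have \<alpha>1: "emeasure \<alpha> (space \<alpha>) = 1" by (simp add: \<beta>.emeasure_space_1)
  have fin\<alpha>: "finite_measure \<alpha>" by (rule finite_measureI) (simp add: \<alpha>1)
  interpret \<alpha>: finite_measure \<alpha> by (rule fin\<alpha>)
  define \<alpha>' where "\<alpha>' = distr \<alpha> borel (\<lambda>s. s)"
  have idm[measurable]: "(\<lambda>s. s) \<in> measurable \<alpha> (borel :: real measure)"
    by (subst measurable_cong_sets[OF s\<alpha> refl]) (simp add: Dom_def measurable_restrict_space1)
  have fin': "finite_measure \<alpha>'" unfolding \<alpha>'_def by (rule \<alpha>.finite_measure_distr[OF idm])
  have s\<alpha>': "sets \<alpha>' = sets borel" by (simp add: \<alpha>'_def)
  have conc: "AE s in \<alpha>'. 0 \<le> s \<and> s < 8"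
    unfolding \<alpha>'_def
  proof (subst AE_distr_iff)
    show "AE x in \<alpha>. 0 \<le> x \<and> x < 8"
      by (rule AE_I2) (use pi_less_4 in \<open>auto simp: sp\<alpha>\<close>)
  qed auto
  have \<beta>': "distr \<alpha>' Circ T' = \<beta>"
    unfolding \<alpha>'_def \<beta>eq
    by (subst distr_distr) (auto intro!: distr_cong simp: T'eq sp\<alpha> space_Dom)
  obtain G' where G'm: "G' \<in> borel_measurable (\<beta> \<Otimes>\<^sub>M U)"
    and G'eq: "distr (\<beta> \<Otimes>\<^sub>M U) (Circ \<Otimes>\<^sub>M borel) (\<lambda>w. (fst w, G' w)) = distr \<alpha>' (Circ \<Otimes>\<^sub>M borel) (\<lambda>s. (T' s, s))"
    using disint[OF fin' s\<alpha>' T'm conc] unfolding \<beta>' U_def by blast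
  have s\<beta>: "sets \<beta> = sets Circ" by (simp add: \<beta>_def length_measure_def)
  have s\<beta>U: "sets (\<beta> \<Otimes>\<^sub>M U) = sets (Circ \<Otimes>\<^sub>M U)" by (rule sets_pair_measure_cong[OF s\<beta> refl])
  define cl where "cl s = (if s \<in> {0..<2*pi} then s else 0)" for s :: real
  have cl_in: "cl s \<in> {0..<2*pi}" for s by (simp add: cl_def)
  have clm[measurable]: "cl \<in> measurable borel Dom"
    unfolding Dom_def measurable_restrict_space2_iff
  proof
    show "cl \<in> measurable borel lborel" unfolding cl_def by simp
    show "cl \<in> space borel \<rightarrow> {0..<2*pi}" using cl_in by auto
  qed
  have G'm'[measurable]: "G' \<in> borel_measurable (Circ \<Otimes>\<^sub>M U)"
    using G'm by (subst (asm) measurable_cong_sets[OF s\<beta>U refl])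
  define G where "G = cl \<circ> G'"
  have Gm: "G \<in> measurable (Circ \<Otimes>\<^sub>M U) Dom" unfolding G_def by (rule measurable_comp[OF G'm' clm])
  have \<Phi>m[measurable]: "(\<lambda>w. (fst w, G' w)) \<in> measurable (\<beta> \<Otimes>\<^sub>M U) (Circ \<Otimes>\<^sub>M borel)"
  proof (rule measurable_Pair)
    show "fst \<in> measurable (\<beta> \<Otimes>\<^sub>M U) Circ"
      by (subst measurable_cong_sets[OF refl s\<beta>[symmetric]]) (rule measurable_fst)
  qed (rule G'm)
  have \<Psi>m[measurable]: "(\<lambda>s. (T' s, s)) \<in> measurable \<alpha>' (Circ \<Otimes>\<^sub>M borel)"
    by (subst measurable_cong_sets[OF s\<alpha>' refl]) (rule measurable_Pair[OF T'm measurable_ident_sets[OF refl]])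
  have snd_cl[measurable]: "cl \<circ> snd \<in> measurable (Circ \<Otimes>\<^sub>M (borel::real measure)) Dom" by (rule measurable_comp[OF measurable_snd clm])
  have dist: "distr (\<beta> \<Otimes>\<^sub>M U) Dom G = \<alpha>"
  proof -
    have "distr (\<beta> \<Otimes>\<^sub>M U) Dom G = distr (distr (\<beta> \<Otimes>\<^sub>M U) (Circ \<Otimes>\<^sub>M borel) (\<lambda>w. (fst w, G' w))) Dom (cl \<circ> snd)"
      by (subst distr_distr[OF snd_cl \<Phi>m]) (simp add: G_def comp_def)
    also have "\<dots> = distr (distr \<alpha>' (Circ \<Otimes>\<^sub>M borel) (\<lambda>s. (T' s, s))) Dom (cl \<circ> snd)"
      by (simp add: G'eq)
    also have "\<dots> = distr \<alpha>' Dom cl"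
      by (subst distr_distr[OF snd_cl \<Psi>m]) (simp add: comp_def)
    also have "\<dots> = distr \<alpha> Dom (cl \<circ> (\<lambda>s. s))"
      unfolding \<alpha>'_def by (rule distr_distr) (simp_all add: idm)
    also have "\<dots> = distr \<alpha> Dom (\<lambda>s. s)"
      by (rule distr_cong) (auto simp: sp\<alpha> cl_def)
    also have "\<dots> = \<alpha>" by (rule distr_id2) (simp add: s\<alpha>)
    finally show ?thesis .
  qed
  have T'borel: "T' \<in> borel_measurable borel"
    using T'm unfolding Circ_def measurable_restrict_space2_iff by simp
  have fst_borel: "fst \<in> borel_measurable (Circ \<Otimes>\<^sub>M (borel::real measure))"
  proof -
    have "(\<lambda>z. z) \<in> borel_measurable Circ" unfolding Circ_def by (rule measurable_restrict_space1) simp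
    then show ?thesis by (rule measurable_compose[OF measurable_fst])
  qed
  have cl_borel: "cl \<in> borel_measurable borel" unfolding cl_def by simp
  have Pset: "{x \<in> space (Circ \<Otimes>\<^sub>M borel). T' (cl (snd x)) = fst x} \<in> sets (Circ \<Otimes>\<^sub>M borel)"
  proof (rule measurable_equality_set[OF _ fst_borel])
    show "(\<lambda>x. T' (cl (snd x))) \<in> borel_measurable (Circ \<Otimes>\<^sub>M borel)"
      using measurable_comp[OF measurable_comp[OF measurable_snd cl_borel] T'borel] by (simp add: comp_def)
  qed
  have Pset2: "{x \<in> space borel. T' (cl x) = T' x} \<in> sets borel"
  proof (rule measurable_equality_set[OF _ T'borel])
    show "(\<lambda>x. T' (cl x)) \<in> borel_measurable borel"
      using measurable_comp[OF cl_borel T'borel] by (simp add: comp_def)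
  qed
  have "AE x in distr \<alpha>' (Circ \<Otimes>\<^sub>M borel) (\<lambda>s. (T' s, s)). T' (cl (snd x)) = fst x"
  proof (subst AE_distr_iff[OF \<Psi>m Pset])
    have "AE s in \<alpha>'. T' (cl s) = T' s"
      unfolding \<alpha>'_def
    proof (subst AE_distr_iff[OF idm Pset2])
      show "AE x in \<alpha>. T' (cl x) = T' x"
        by (rule AE_I2) (simp add: sp\<alpha> cl_def)
    qed
    then show "AE s in \<alpha>'. T' (cl (snd (T' s, s))) = fst (T' s, s)" by simp
  qed
  then have "AE x in distr (\<beta> \<Otimes>\<^sub>M U) (Circ \<Otimes>\<^sub>M borel) (\<lambda>w. (fst w, G' w)). T' (cl (snd x)) = fst x"
    by (simp only: G'eq)
  then have "AE w in \<beta> \<Otimes>\<^sub>M U. T' (cl (G' w)) = fst w"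
    by (subst (asm) AE_distr_iff[OF \<Phi>m Pset]) simp
  then have AEG: "AE w in \<beta> \<Otimes>\<^sub>M U. gauss dc (G w) = fst w"
  proof (rule AE_mp[OF _ AE_I2], intro impI)
    fix w assume "T' (cl (G' w)) = fst w"
    moreover have "T' (cl (G' w)) = gauss dc (cl (G' w))" by (rule T'eq) (use cl_in[of "G' w"] in \<open>simp add: space_Dom\<close>)
    ultimately show "gauss dc (G w) = fst w" by (simp add: G_def)
  qed
  show ?thesis
    using Gm dist AEG unfolding U_def \<beta>_def \<alpha>_def by blast
qed



lemma circ_borel: "h \<in> measurable M Circ \<Longrightarrow> h \<in> borel_measurable M"
  by (simp add: Circ_def measurable_restrict_space2_iff)

lemma gauss_Dom:
  assumes cl: "convex_loop c dc"
  shows "gauss dc \<in> measurable Dom Circ"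
proof -
  define dc' where "dc' = (\<lambda>s. indicator {0..<2*pi} s *\<^sub>R dc s)"
  have dc'm[measurable]: "dc' \<in> borel_measurable borel" unfolding dc'_def by (rule dc_meas[OF cl])
  have T'm: "gauss dc' \<in> measurable borel Circ" by (rule gauss_meas_gen) simp
  have T'eq: "s \<in> space Dom \<Longrightarrow> gauss dc' s = gauss dc s" for s
    by (simp add: gauss_def dc'_def space_Dom)
  have "gauss dc' \<in> measurable Dom Circ" unfolding Dom_def by (rule measurable_restrict_space1) (simp add: T'm)
  then show ?thesis using T'eq by (subst measurable_cong[where g="gauss dc'"]) auto
qed

lemma marg1:
  fixes \<eta> :: "('a \<times> 'b) measure"
  assumes fin: "finite_measure \<eta>" and s\<eta>: "sets \<eta> = sets (A \<Otimes>\<^sub>M B)"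
    and pN: "prob_space N" and pK: "prob_space K"
  shows "distr (\<eta> \<Otimes>\<^sub>M (N \<Otimes>\<^sub>M K)) (A \<Otimes>\<^sub>M N) (\<lambda>w. (fst (fst w), fst (snd w))) = distr \<eta> A fst \<Otimes>\<^sub>M N"
proof -
  interpret \<eta>: finite_measure \<eta> by (rule fin)
  interpret N: prob_space N by (rule pN)
  interpret K: prob_space K by (rule pK)
  interpret NK: prob_space "N \<Otimes>\<^sub>M K" by (rule prob_space_pair[OF pN pK])
  have fstm: "fst \<in> measurable \<eta> A" by (subst measurable_cong_sets[OF s\<eta> refl]) simp
  interpret D: finite_measure "distr \<eta> A fst" by (rule \<eta>.finite_measure_distr[OF fstm])
  have fm: "(\<lambda>w. (fst (fst w), fst (snd w))) \<in> measurable (\<eta> \<Otimes>\<^sub>M (N \<Otimes>\<^sub>M K)) (A \<Otimes>\<^sub>M N)"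
  proof (rule measurable_Pair)
    show "(\<lambda>w. fst (fst w)) \<in> measurable (\<eta> \<Otimes>\<^sub>M (N \<Otimes>\<^sub>M K)) A"
      by (rule measurable_compose[OF measurable_fst fstm])
    show "(\<lambda>w. fst (snd w)) \<in> measurable (\<eta> \<Otimes>\<^sub>M (N \<Otimes>\<^sub>M K)) N"
      by (rule measurable_compose[OF measurable_snd measurable_fst])
  qed
  have "distr \<eta> A fst \<Otimes>\<^sub>M N = distr (\<eta> \<Otimes>\<^sub>M (N \<Otimes>\<^sub>M K)) (A \<Otimes>\<^sub>M N) (\<lambda>w. (fst (fst w), fst (snd w)))"
  proof (rule pair_measure_eqI)
    show "sigma_finite_measure (distr \<eta> A fst)" by (rule D.sigma_finite_measure_axioms)
    show "sigma_finite_measure N" by (rule N.sigma_finite_measure_axioms)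
    show "sets (distr \<eta> A fst \<Otimes>\<^sub>M N) = sets (distr (\<eta> \<Otimes>\<^sub>M (N \<Otimes>\<^sub>M K)) (A \<Otimes>\<^sub>M N) (\<lambda>w. (fst (fst w), fst (snd w))))"
      by (subst sets_distr) (rule sets_pair_measure_cong; simp)
  next
    fix X Bs assume X: "X \<in> sets (distr \<eta> A fst)" and Bs: "Bs \<in> sets N"
    have X': "X \<in> sets A" using X by simp
    have pre: "(\<lambda>w. (fst (fst w), fst (snd w))) -` (X \<times> Bs) \<inter> space (\<eta> \<Otimes>\<^sub>M (N \<Otimes>\<^sub>M K))
        = (fst -` X \<inter> space \<eta>) \<times> (Bs \<times> space K)"
      using sets.sets_into_space[OF Bs] by (auto simp: space_pair_measure)
    have s1: "fst -` X \<inter> space \<eta> \<in> sets \<eta>" by (rule measurable_sets[OF fstm X'])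
    have "emeasure (distr (\<eta> \<Otimes>\<^sub>M (N \<Otimes>\<^sub>M K)) (A \<Otimes>\<^sub>M N) (\<lambda>w. (fst (fst w), fst (snd w)))) (X \<times> Bs)
        = emeasure (\<eta> \<Otimes>\<^sub>M (N \<Otimes>\<^sub>M K)) ((fst -` X \<inter> space \<eta>) \<times> (Bs \<times> space K))"
      using X' Bs by (subst emeasure_distr[OF fm]) (auto simp: pre)
    also have "\<dots> = emeasure \<eta> (fst -` X \<inter> space \<eta>) * emeasure (N \<Otimes>\<^sub>M K) (Bs \<times> space K)"
      using s1 Bs by (intro NK.emeasure_pair_measure_Times) auto
    also have "emeasure (N \<Otimes>\<^sub>M K) (Bs \<times> space K) = emeasure N Bs"
      using Bs by (simp add: K.emeasure_pair_measure_Times K.emeasure_space_1)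
    also have "emeasure \<eta> (fst -` X \<inter> space \<eta>) = emeasure (distr \<eta> A fst) X"
      using X' by (simp add: emeasure_distr[OF fstm])
    finally show "emeasure (distr \<eta> A fst) X * emeasure N Bs = emeasure (distr (\<eta> \<Otimes>\<^sub>M (N \<Otimes>\<^sub>M K)) (A \<Otimes>\<^sub>M N) (\<lambda>w. (fst (fst w), fst (snd w)))) (X \<times> Bs)"
      by simp
  qed
  then show ?thesis by simp
qed

lemma marg2:
  fixes \<eta> :: "('a \<times> 'b) measure"
  assumes fin: "finite_measure \<eta>" and s\<eta>: "sets \<eta> = sets (A \<Otimes>\<^sub>M B)"
    and pN: "prob_space N" and pK: "prob_space K"
  shows "distr (\<eta> \<Otimes>\<^sub>M (N \<Otimes>\<^sub>M K)) (B \<Otimes>\<^sub>M K) (\<lambda>w. (snd (fst w), snd (snd w))) = distr \<eta> B snd \<Otimes>\<^sub>M K"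
proof -
  interpret \<eta>: finite_measure \<eta> by (rule fin)
  interpret N: prob_space N by (rule pN)
  interpret K: prob_space K by (rule pK)
  interpret NK: prob_space "N \<Otimes>\<^sub>M K" by (rule prob_space_pair[OF pN pK])
  have sndm: "snd \<in> measurable \<eta> B" by (subst measurable_cong_sets[OF s\<eta> refl]) simp
  interpret D: finite_measure "distr \<eta> B snd" by (rule \<eta>.finite_measure_distr[OF sndm])
  have fm: "(\<lambda>w. (snd (fst w), snd (snd w))) \<in> measurable (\<eta> \<Otimes>\<^sub>M (N \<Otimes>\<^sub>M K)) (B \<Otimes>\<^sub>M K)"
  proof (rule measurable_Pair)
    show "(\<lambda>w. snd (fst w)) \<in> measurable (\<eta> \<Otimes>\<^sub>M (N \<Otimes>\<^sub>M K)) B"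
      by (rule measurable_compose[OF measurable_fst sndm])
    show "(\<lambda>w. snd (snd w)) \<in> measurable (\<eta> \<Otimes>\<^sub>M (N \<Otimes>\<^sub>M K)) K"
      by (rule measurable_compose[OF measurable_snd measurable_snd])
  qed
  have "distr \<eta> B snd \<Otimes>\<^sub>M K = distr (\<eta> \<Otimes>\<^sub>M (N \<Otimes>\<^sub>M K)) (B \<Otimes>\<^sub>M K) (\<lambda>w. (snd (fst w), snd (snd w)))"
  proof (rule pair_measure_eqI)
    show "sigma_finite_measure (distr \<eta> B snd)" by (rule D.sigma_finite_measure_axioms)
    show "sigma_finite_measure K" by (rule K.sigma_finite_measure_axioms)
    show "sets (distr \<eta> B snd \<Otimes>\<^sub>M K) = sets (distr (\<eta> \<Otimes>\<^sub>M (N \<Otimes>\<^sub>M K)) (B \<Otimes>\<^sub>M K) (\<lambda>w. (snd (fst w), snd (snd w))))"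
      by (subst sets_distr) (rule sets_pair_measure_cong; simp)
  next
    fix X Bs assume X: "X \<in> sets (distr \<eta> B snd)" and Bs: "Bs \<in> sets K"
    have X': "X \<in> sets B" using X by simp
    have pre: "(\<lambda>w. (snd (fst w), snd (snd w))) -` (X \<times> Bs) \<inter> space (\<eta> \<Otimes>\<^sub>M (N \<Otimes>\<^sub>M K))
        = (snd -` X \<inter> space \<eta>) \<times> (space N \<times> Bs)"
      using sets.sets_into_space[OF Bs] by (auto simp: space_pair_measure)
    have s1: "snd -` X \<inter> space \<eta> \<in> sets \<eta>" by (rule measurable_sets[OF sndm X'])
    have "emeasure (distr (\<eta> \<Otimes>\<^sub>M (N \<Otimes>\<^sub>M K)) (B \<Otimes>\<^sub>M K) (\<lambda>w. (snd (fst w), snd (snd w)))) (X \<times> Bs)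
        = emeasure (\<eta> \<Otimes>\<^sub>M (N \<Otimes>\<^sub>M K)) ((snd -` X \<inter> space \<eta>) \<times> (space N \<times> Bs))"
      using X' Bs by (subst emeasure_distr[OF fm]) (auto simp: pre)
    also have "\<dots> = emeasure \<eta> (snd -` X \<inter> space \<eta>) * emeasure (N \<Otimes>\<^sub>M K) (space N \<times> Bs)"
      using s1 Bs by (intro NK.emeasure_pair_measure_Times) auto
    also have "emeasure (N \<Otimes>\<^sub>M K) (space N \<times> Bs) = emeasure K Bs"
      using Bs by (simp add: K.emeasure_pair_measure_Times N.emeasure_space_1)
    also have "emeasure \<eta> (snd -` X \<inter> space \<eta>) = emeasure (distr \<eta> B snd) X"
      using X' by (simp add: emeasure_distr[OF sndm])
    finally show "emeasure (distr \<eta> B snd) X * emeasure K Bs = emeasure (distr (\<eta> \<Otimes>\<^sub>M (N \<Otimes>\<^sub>M K)) (B \<Otimes>\<^sub>M K) (\<lambda>w. (snd (fst w), snd (snd w)))) (X \<times> Bs)"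
      by simp
  qed
  then show ?thesis by simp
qed



theorem lemma3p10:
  fixes c0 c1 dc0 dc1 :: "real \<Rightarrow> complex" and \<sigma>0 \<sigma>1 :: "complex \<Rightarrow> real"
    and \<eta> :: "(complex \<times> complex) measure"
  assumes "convex_loop c0 dc0" and "convex_loop c1 dc1"
    and "\<sigma>0 \<in> borel_measurable Circ" and "\<sigma>1 \<in> borel_measurable Circ"
    and "\<forall>x\<in>sphere 0 1. \<sigma>0 x \<ge> 0" and "\<forall>x\<in>sphere 0 1. \<sigma>1 x \<ge> 0"
    and "integrable (length_measure dc0) \<sigma>0" and "integrable (length_measure dc1) \<sigma>1"
    and "prob_space (density (length_measure dc0) (\<lambda>x. ennreal (\<sigma>0 x)))"
    and "prob_space (density (length_measure dc1) (\<lambda>x. ennreal (\<sigma>1 x)))"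
    and "\<eta> \<in> couplings Circ Circ
              (density (length_measure dc0) (\<lambda>x. ennreal (\<sigma>0 x)))
              (density (length_measure dc1) (\<lambda>x. ennreal (\<sigma>1 x)))"
  shows "\<exists>\<nu> \<in> couplings Dom Dom
              (density (arclen dc0) (\<lambda>s. ennreal ((\<sigma>0 \<circ> gauss dc0) s)))
              (density (arclen dc1) (\<lambda>s. ennreal ((\<sigma>1 \<circ> gauss dc1) s))).
           \<eta> = distr \<nu> (Circ \<Otimes>\<^sub>M Circ) (\<lambda>(s, t). (gauss dc0 s, gauss dc1 t))"
proof -
  define U where "U = restrict_space lborel {0<..<1::real}"
  define \<beta>0 where "\<beta>0 = density (length_measure dc0) (\<lambda>x. ennreal (\<sigma>0 x))"
  define \<beta>1 where "\<beta>1 = density (length_measure dc1) (\<lambda>x. ennreal (\<sigma>1 x))"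
  define \<alpha>0 where "\<alpha>0 = density (arclen dc0) (\<lambda>s. ennreal ((\<sigma>0 \<circ> gauss dc0) s))"
  define \<alpha>1 where "\<alpha>1 = density (arclen dc1) (\<lambda>s. ennreal ((\<sigma>1 \<circ> gauss dc1) s))"
  obtain G0 where G0m: "G0 \<in> measurable (Circ \<Otimes>\<^sub>M U) Dom" and G0d: "distr (\<beta>0 \<Otimes>\<^sub>M U) Dom G0 = \<alpha>0"
    and G0ae: "AE w in \<beta>0 \<Otimes>\<^sub>M U. gauss dc0 (G0 w) = fst w"
    using side[OF assms(1) assms(3) assms(9)] unfolding U_def \<beta>0_def \<alpha>0_def by blast
  obtain G1 where G1m: "G1 \<in> measurable (Circ \<Otimes>\<^sub>M U) Dom" and G1d: "distr (\<beta>1 \<Otimes>\<^sub>M U) Dom G1 = \<alpha>1"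
    and G1ae: "AE w in \<beta>1 \<Otimes>\<^sub>M U. gauss dc1 (G1 w) = fst w"
    using side[OF assms(2) assms(4) assms(10)] unfolding U_def \<beta>1_def \<alpha>1_def by blast
  have s\<eta>: "sets \<eta> = sets (Circ \<Otimes>\<^sub>M Circ)" and fin\<eta>: "finite_measure \<eta>"
    and m0: "distr \<eta> Circ fst = \<beta>0" and m1: "distr \<eta> Circ snd = \<beta>1"
    using assms(11) unfolding couplings_def \<beta>0_def \<beta>1_def by auto
  have pU: "prob_space U" unfolding U_def by (rule prob_U)
  have pUU: "prob_space (U \<Otimes>\<^sub>M U)" by (rule prob_space_pair[OF pU pU])
  interpret UU: prob_space "U \<Otimes>\<^sub>M U" by (rule pUU)
  define M where "M = \<eta> \<Otimes>\<^sub>M (U \<Otimes>\<^sub>M U)"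
  define f0 where "f0 = (\<lambda>w::(complex \<times> complex) \<times> (real \<times> real). (fst (fst w), fst (snd w)))"
  define f1 where "f1 = (\<lambda>w::(complex \<times> complex) \<times> (real \<times> real). (snd (fst w), snd (snd w)))"
  have P0: "distr M (Circ \<Otimes>\<^sub>M U) f0 = \<beta>0 \<Otimes>\<^sub>M U"
    unfolding M_def f0_def using marg1[OF fin\<eta> s\<eta> pU pU] m0 by simp
  have P1: "distr M (Circ \<Otimes>\<^sub>M U) f1 = \<beta>1 \<Otimes>\<^sub>M U"
    unfolding M_def f1_def using marg2[OF fin\<eta> s\<eta> pU pU] m1 by simp
  have fstm: "fst \<in> measurable \<eta> Circ" by (subst measurable_cong_sets[OF s\<eta> refl]) simp
  have sndm: "snd \<in> measurable \<eta> Circ" by (subst measurable_cong_sets[OF s\<eta> refl]) simp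
  have f0m: "f0 \<in> measurable M (Circ \<Otimes>\<^sub>M U)" unfolding f0_def M_def
  proof (rule measurable_Pair)
    show "(\<lambda>w. fst (fst w)) \<in> measurable (\<eta> \<Otimes>\<^sub>M (U \<Otimes>\<^sub>M U)) Circ"
      by (rule measurable_compose[OF measurable_fst fstm])
    show "(\<lambda>w. fst (snd w)) \<in> measurable (\<eta> \<Otimes>\<^sub>M (U \<Otimes>\<^sub>M U)) U"
      by (rule measurable_compose[OF measurable_snd measurable_fst])
  qed
  have f1m: "f1 \<in> measurable M (Circ \<Otimes>\<^sub>M U)" unfolding f1_def M_def
  proof (rule measurable_Pair)
    show "(\<lambda>w. snd (fst w)) \<in> measurable (\<eta> \<Otimes>\<^sub>M (U \<Otimes>\<^sub>M U)) Circ"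
      by (rule measurable_compose[OF measurable_fst sndm])
    show "(\<lambda>w. snd (snd w)) \<in> measurable (\<eta> \<Otimes>\<^sub>M (U \<Otimes>\<^sub>M U)) U"
      by (rule measurable_compose[OF measurable_snd measurable_snd])
  qed
  define \<Phi> where "\<Phi> w = (G0 (f0 w), G1 (f1 w))" for w
  have \<Phi>m: "\<Phi> \<in> measurable M (Dom \<Otimes>\<^sub>M Dom)" unfolding \<Phi>_def
    by (rule measurable_Pair[OF measurable_compose[OF f0m G0m] measurable_compose[OF f1m G1m]])
  define \<nu> where "\<nu> = distr M (Dom \<Otimes>\<^sub>M Dom) \<Phi>"
  have finM: "finite_measure M" unfolding M_def
    by (rule finite_measure_pair_measure[OF UU.finite_measure_axioms fin\<eta>])
  have fin\<nu>: "finite_measure \<nu>" unfolding \<nu>_def by (rule finite_measure.finite_measure_distr[OF finM \<Phi>m])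
  have d0: "distr \<nu> Dom fst = \<alpha>0"
  proof -
    have "distr \<nu> Dom fst = distr M Dom (fst \<circ> \<Phi>)" unfolding \<nu>_def by (rule distr_distr[OF measurable_fst \<Phi>m])
    also have "fst \<circ> \<Phi> = G0 \<circ> f0" by (simp add: \<Phi>_def fun_eq_iff)
    also have "distr M Dom (G0 \<circ> f0) = distr (distr M (Circ \<Otimes>\<^sub>M U) f0) Dom G0"
      by (rule distr_distr[symmetric, OF G0m f0m])
    also have "\<dots> = \<alpha>0" by (simp add: P0 G0d)
    finally show ?thesis .
  qed
  have d1: "distr \<nu> Dom snd = \<alpha>1"
  proof -
    have "distr \<nu> Dom snd = distr M Dom (snd \<circ> \<Phi>)" unfolding \<nu>_def by (rule distr_distr[OF measurable_snd \<Phi>m])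
    also have "snd \<circ> \<Phi> = G1 \<circ> f1" by (simp add: \<Phi>_def fun_eq_iff)
    also have "distr M Dom (G1 \<circ> f1) = distr (distr M (Circ \<Otimes>\<^sub>M U) f1) Dom G1"
      by (rule distr_distr[symmetric, OF G1m f1m])
    also have "\<dots> = \<alpha>1" by (simp add: P1 G1d)
    finally show ?thesis .
  qed
  have coup: "\<nu> \<in> couplings Dom Dom \<alpha>0 \<alpha>1"
    unfolding couplings_def using fin\<nu> d0 d1 by (simp add: \<nu>_def)
  have g0m: "gauss dc0 \<in> measurable Dom Circ" by (rule gauss_Dom[OF assms(1)])
  have g1m: "gauss dc1 \<in> measurable Dom Circ" by (rule gauss_Dom[OF assms(2)])
  define g where "g = (\<lambda>(s, t). (gauss dc0 s, gauss dc1 t))"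
  have gm: "g \<in> measurable (Dom \<Otimes>\<^sub>M Dom) (Circ \<Otimes>\<^sub>M Circ)"
  proof -
    have "(\<lambda>w. (gauss dc0 (fst w), gauss dc1 (snd w))) \<in> measurable (Dom \<Otimes>\<^sub>M Dom) (Circ \<Otimes>\<^sub>M Circ)"
      by (rule measurable_Pair[OF measurable_compose[OF measurable_fst g0m] measurable_compose[OF measurable_snd g1m]])
    then show ?thesis unfolding g_def split_beta' .
  qed
  have set0: "{x \<in> space (Circ \<Otimes>\<^sub>M U). gauss dc0 (G0 x) = fst x} \<in> sets (Circ \<Otimes>\<^sub>M U)"
    by (rule measurable_equality_set[OF circ_borel[OF measurable_compose[OF G0m g0m]] circ_borel[OF measurable_fst]])
  have set1: "{x \<in> space (Circ \<Otimes>\<^sub>M U). gauss dc1 (G1 x) = fst x} \<in> sets (Circ \<Otimes>\<^sub>M U)"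
    by (rule measurable_equality_set[OF circ_borel[OF measurable_compose[OF G1m g1m]] circ_borel[OF measurable_fst]])
  have "AE x in distr M (Circ \<Otimes>\<^sub>M U) f0. gauss dc0 (G0 x) = fst x" using G0ae by (simp only: P0)
  then have AE0: "AE w in M. gauss dc0 (G0 (f0 w)) = fst (f0 w)"
    by (subst (asm) AE_distr_iff[OF f0m set0])
  have "AE x in distr M (Circ \<Otimes>\<^sub>M U) f1. gauss dc1 (G1 x) = fst x" using G1ae by (simp only: P1)
  then have AE1: "AE w in M. gauss dc1 (G1 (f1 w)) = fst (f1 w)"
    by (subst (asm) AE_distr_iff[OF f1m set1])
  have fstM: "fst \<in> measurable M (Circ \<Otimes>\<^sub>M Circ)" unfolding M_def
    by (subst measurable_cong_sets[OF refl s\<eta>[symmetric]]) (rule measurable_fst)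
  have "distr \<nu> (Circ \<Otimes>\<^sub>M Circ) g = distr M (Circ \<Otimes>\<^sub>M Circ) (g \<circ> \<Phi>)"
    unfolding \<nu>_def by (rule distr_distr[OF gm \<Phi>m])
  also have "\<dots> = distr M (Circ \<Otimes>\<^sub>M Circ) fst"
  proof (rule distr_cong_AE)
    show "AE x in M. (g \<circ> \<Phi>) x = fst x"
      using AE0 AE1 by eventually_elim (simp add: g_def \<Phi>_def f0_def f1_def prod_eq_iff)
    show "g \<circ> \<Phi> \<in> measurable M (Circ \<Otimes>\<^sub>M Circ)" by (rule measurable_comp[OF \<Phi>m gm])
  qed (simp_all add: fstM)
  also have "\<dots> = distr M \<eta> fst" by (rule distr_cong) (simp_all add: s\<eta>)
  also have "\<dots> = \<eta>" unfolding M_def by (rule UU.distr_pair_fst)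
  finally have eq: "\<eta> = distr \<nu> (Circ \<Otimes>\<^sub>M Circ) g" by simp
  show ?thesis using coup eq unfolding \<alpha>0_def \<alpha>1_def g_def by blast
qed


end
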